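(* (a) For every $\epsilon>0$ there are infinitely many natural numbers $k$ with $h(k)>(2-\epsilon)k$. (b) For every $\epsilon>0$ there is $K$ such that $h(k)<(2+\epsilon)k\ln k$ for all $k\geq K$ (in particular $h(k)$ exists for every $k$).
   Context: Graphs are finite, may have multiple edges but no loops. For an Abelian group $\Gamma$, a graph $G$ is $\Gamma$-colorable if for some (equivalently, any) orientation $D$ of $G$ and every function $\varphi:E(G)\to\Gamma$ there is a vertex coloring $c:V(G)\to\Gamma$ with $c(w)-c(u)\neq\varphi(uw)$ for every directed edge $uw$ of $D$. For a natural number $k$, $h(k)$ is the least number such that whenever a graph $G$ is $\Gamma$-colorable for some Abelian group $\Gamma$ of order $k$, $G$ is also $\Gamma'$-colorable for every Abelian group $\Gamma'$ of order $|\Gamma'|\geq h(k)$. *)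

theory Defs
  imports Complex_Main "HOL-Algebra.Group"
begin

text \<open>A finite (multi)graph without loops, given together with an orientation:
  vertex set V, edge set E (edges are abstract objects, so parallel edges are allowed),
  and ends e = (u, w) meaning e is directed from u to w.\<close>
definition is_oriented_graph :: "'v set \<Rightarrow> 'e set \<Rightarrow> ('e \<Rightarrow> 'v \<times> 'v) \<Rightarrow> bool" where
  "is_oriented_graph V E ends \<longleftrightarrow> finite V \<and> finite E \<and>
     (\<forall>e\<in>E. fst (ends e) \<in> V \<and> snd (ends e) \<in> V \<and> fst (ends e) \<noteq> snd (ends e))"

text \<open>Group colorability (abelian group written multiplicatively, as in HOL-Algebra):
  for every phi : E -> Gamma there is c : V -> Gamma with c(w) - c(u) \<noteq> phi(uw).\<close>
definition group_colorable ::
  "'v set \<Rightarrow> 'e set \<Rightarrow> ('e \<Rightarrow> 'v \<times> 'v) \<Rightarrow> ('g, 'm) monoid_scheme \<Rightarrow> bool" where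
  "group_colorable V E ends \<Gamma> \<longleftrightarrow>
     (\<forall>\<phi> \<in> E \<rightarrow> carrier \<Gamma>. \<exists>c \<in> V \<rightarrow> carrier \<Gamma>.
        \<forall>e\<in>E. c (snd (ends e)) \<otimes>\<^bsub>\<Gamma>\<^esub> inv\<^bsub>\<Gamma>\<^esub> (c (fst (ends e))) \<noteq> \<phi> e)"

text \<open>Finite abelian group of order k. Graphs and groups are represented on nat
  (every finite graph / finite group is isomorphic to one of these, and colorability
  is invariant under isomorphism).\<close>
definition abelian_of_order :: "('g, 'm) monoid_scheme \<Rightarrow> nat \<Rightarrow> bool" where
  "abelian_of_order \<Gamma> k \<longleftrightarrow> comm_group \<Gamma> \<and> finite (carrier \<Gamma>) \<and> card (carrier \<Gamma>) = k"

definition h_bound :: "nat \<Rightarrow> nat \<Rightarrow> bool" where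
  "h_bound k n \<longleftrightarrow>
     (\<forall>(V :: nat set) (E :: nat set) ends (\<Gamma> :: nat monoid).
        is_oriented_graph V E ends \<and> abelian_of_order \<Gamma> k \<and> group_colorable V E ends \<Gamma> \<longrightarrow>
        (\<forall>(\<Gamma>' :: nat monoid) m. abelian_of_order \<Gamma>' m \<and> m \<ge> n \<longrightarrow>
            group_colorable V E ends \<Gamma>'))"

definition h :: "nat \<Rightarrow> nat" where
  "h k = (LEAST n. h_bound k n)"

end

theory Submission
  imports Defs "HOL-Number_Theory.Number_Theory" "HOL-Library.FuncSet"
begin

definition zmodg :: "nat \<Rightarrow> nat monoid" where
  "zmodg n = \<lparr>carrier = {..<n}, monoid.mult = (\<lambda>x y. (x + y) mod n), one = 0\<rparr>"

lemma zmodg_simps: "carrier (zmodg n) = {..<n}" "x \<otimes>\<^bsub>zmodg n\<^esub> y = (x + y) mod n"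
  "\<one>\<^bsub>zmodg n\<^esub> = 0"
  by (simp_all add: zmodg_def)

lemma zmodg_comm_group: assumes "0 < n" shows "comm_group (zmodg n)"
proof (rule comm_groupI)
  fix x y z
  assume x: "x \<in> carrier (zmodg n)" and y: "y \<in> carrier (zmodg n)" and z: "z \<in> carrier (zmodg n)"
  show "x \<otimes>\<^bsub>zmodg n\<^esub> y \<otimes>\<^bsub>zmodg n\<^esub> z = x \<otimes>\<^bsub>zmodg n\<^esub> (y \<otimes>\<^bsub>zmodg n\<^esub> z)"
    by (simp add: zmodg_simps mod_add_left_eq mod_add_right_eq add.assoc)
next
  fix x y
  assume x: "x \<in> carrier (zmodg n)" and y: "y \<in> carrier (zmodg n)"
  show "x \<otimes>\<^bsub>zmodg n\<^esub> y \<in> carrier (zmodg n)" using assms by (simp add: zmodg_simps)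
  show "x \<otimes>\<^bsub>zmodg n\<^esub> y = y \<otimes>\<^bsub>zmodg n\<^esub> x" by (simp add: zmodg_simps add.commute)
next
  show "\<one>\<^bsub>zmodg n\<^esub> \<in> carrier (zmodg n)" using assms by (simp add: zmodg_simps)
next
  fix x assume x: "x \<in> carrier (zmodg n)"
  then show "\<one>\<^bsub>zmodg n\<^esub> \<otimes>\<^bsub>zmodg n\<^esub> x = x" by (simp add: zmodg_simps)
  have "(n - x) mod n \<in> carrier (zmodg n)" using assms by (simp add: zmodg_simps)
  moreover have "(n - x) mod n \<otimes>\<^bsub>zmodg n\<^esub> x = \<one>\<^bsub>zmodg n\<^esub>"
    using x by (cases "x = 0") (auto simp: zmodg_simps)
  ultimately show "\<exists>y\<in>carrier (zmodg n). y \<otimes>\<^bsub>zmodg n\<^esub> x = \<one>\<^bsub>zmodg n\<^esub>" by blast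
qed

lemma zmodg_inv: assumes "0 < n" "x < n" shows "inv\<^bsub>zmodg n\<^esub> x = (n - x) mod n"
proof -
  interpret comm_group "zmodg n" using zmodg_comm_group[OF assms(1)] .
  show ?thesis
  proof (rule inv_equality)
    show "(n - x) mod n \<otimes>\<^bsub>zmodg n\<^esub> x = \<one>\<^bsub>zmodg n\<^esub>"
      using assms by (cases "x = 0") (auto simp: zmodg_simps)
  qed (use assms in \<open>auto simp: zmodg_simps\<close>)
qed

lemma zmodg_order: "0 < n \<Longrightarrow> abelian_of_order (zmodg n) n"
  unfolding abelian_of_order_def using zmodg_comm_group by (simp add: zmodg_simps)

lemma zmodg_diff: assumes "0 < n" "a < n" "b < n"
  shows "(a \<otimes>\<^bsub>zmodg n\<^esub> inv\<^bsub>zmodg n\<^esub> b) < n"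
    "((a \<otimes>\<^bsub>zmodg n\<^esub> inv\<^bsub>zmodg n\<^esub> b) + b) mod n = a"
proof -
  have "(a + (n - b) mod n + b) mod n = a"
    using assms by (cases "b = 0") (auto simp: add.assoc)
  then show "(a \<otimes>\<^bsub>zmodg n\<^esub> inv\<^bsub>zmodg n\<^esub> b) < n"
    "((a \<otimes>\<^bsub>zmodg n\<^esub> inv\<^bsub>zmodg n\<^esub> b) + b) mod n = a"
    using assms by (simp_all add: zmodg_inv zmodg_simps mod_add_left_eq)
qed

lemma t1: "(r::nat) < p \<Longrightarrow> d < p \<Longrightarrow> (r + b) mod p = (d + b) mod p \<Longrightarrow> r = d"
  using cong_add_rcancel_nat[of r b d p] by (simp add: cong_def)

lemma t2: assumes "(y::nat) < p" "a < p" "b < p" "(y + a) mod p = (x + b) mod p"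
  shows "y = (x + (b + p - a) mod p) mod p"
proof -
  have "((x + (b + p - a) mod p) mod p + a) mod p = (x + b) mod p"
  proof -
    have "((x + (b + p - a) mod p) mod p + a) mod p = (x + (b + p - a) + a) mod p"
      by (metis mod_add_left_eq mod_add_right_eq)
    also have "x + (b + p - a) + a = (x + b) + p" using assms by simp
    finally show ?thesis by simp
  qed
  then show ?thesis using assms t1[of y p "(x + (b + p - a) mod p) mod p" a]
    by (metis mod_less_divisor gr_implies_not0 neq0_conv)
qed

lemma orbit_all:
  assumes p: "prime (p::nat)" and d: "0 < d" "d < p" and x0: "x0 \<in> A"
    and cl: "\<And>x. x \<in> A \<Longrightarrow> (x + d) mod p \<in> A" and Asub: "A \<subseteq> {..<p}"
  shows "A = {..<p}"
proof -
  have orb: "(x0 + n * d) mod p \<in> A" for n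
  proof (induction n)
    case 0 then show ?case using x0 Asub by auto
  next
    case (Suc n)
    have "((x0 + n * d) mod p + d) mod p \<in> A" using cl[OF Suc] .
    moreover have "((x0 + n * d) mod p + d) mod p = (x0 + Suc n * d) mod p"
      by (metis mod_add_left_eq add.assoc add.commute mult_Suc)
    ultimately show ?case by simp
  qed
  have "coprime d p"
    using p d by (metis coprime_commute not_less prime_imp_coprime nat_dvd_not_less)
  then obtain u where u: "[d * u = 1] (mod p)" using cong_solve_coprime_nat by auto
  have "z \<in> A" if z: "z < p" for z
  proof -
    have x0p: "x0 < p" using x0 Asub by auto
    have "[x0 + (u * (z + p - x0)) * d = x0 + (d * u) * (z + p - x0)] (mod p)"
      by (simp add: algebra_simps)
    also have "[x0 + (d * u) * (z + p - x0) = x0 + 1 * (z + p - x0)] (mod p)"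
      by (intro cong_add cong_mult u cong_refl)
    also have "x0 + 1 * (z + p - x0) = z + p" using x0p by simp
    finally have "(x0 + (u * (z + p - x0)) * d) mod p = (z + p) mod p" by (simp add: cong_def)
    then have "(x0 + (u * (z + p - x0)) * d) mod p = z" using z by simp
    then show ?thesis using orb by metis
  qed
  then show ?thesis using Asub by auto
qed

lemma sumset_step:
  assumes p: "prime (p::nat)" and A: "A \<subseteq> {..<p}" "A \<noteq> {}"
    and S: "S \<subseteq> {..<p}" "a \<in> S" "b \<in> S" "a \<noteq> b"
  shows "min p (card A + 1) \<le> card {(x + s) mod p | x s. x \<in> A \<and> s \<in> S}"
proof -
  define B where "B = {(x + s) mod p | x s. x \<in> A \<and> s \<in> S}"
  have p0: "0 < p" using p prime_gt_0_nat by blast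
  have Bsub: "B \<subseteq> {..<p}" using p0 by (auto simp: B_def)
  have finB: "finite B" using Bsub finite_subset by blast
  have finA: "finite A" using A finite_subset by blast
  have inj: "inj_on (\<lambda>x. (x + c) mod p) A" if "c < p" for c
  proof (rule inj_onI)
    fix x y assume "x \<in> A" "y \<in> A" "(x + c) mod p = (y + c) mod p"
    then show "x = y" using t1[of x p y c] A by auto
  qed
  have ab: "a < p" "b < p" using S by auto
  have imA: "(\<lambda>x. (x + c) mod p) ` A \<subseteq> B" if "c \<in> S" for c
    using that by (auto simp: B_def)
  have cardim: "card ((\<lambda>x. (x + c) mod p) ` A) = card A" if "c \<in> S" for c
    using inj[of c] that S by (auto simp: card_image)
  show ?thesis
  proof (cases "card A + 1 \<le> card B")
    case True then show ?thesis by (simp add: B_def)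
  next
    case False
    have eqa: "(\<lambda>x. (x + a) mod p) ` A = B"
      using card_subset_eq[OF finB imA[OF S(2)]] cardim[OF S(2)] False
        card_mono[OF finB imA[OF S(2)]] by linarith
    have eqb: "(\<lambda>x. (x + b) mod p) ` A = B"
      using card_subset_eq[OF finB imA[OF S(3)]] cardim[OF S(3)] False
        card_mono[OF finB imA[OF S(3)]] by linarith
    define d where "d = (b + p - a) mod p"
    have d: "0 < d" "d < p"
    proof -
      show "d < p" using p0 by (simp add: d_def)
      show "0 < d"
      proof (rule ccontr)
        assume "\<not> 0 < d"
        then have "(b + p - a) mod p = 0" by (simp add: d_def)
        then have "p dvd (b + p - a)" by auto
        moreover have "0 < b + p - a" "b + p - a < 2 * p" using ab by auto
        ultimately have "b + p - a = p"
        proof -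
          assume dv: "p dvd (b + p - a)" and q: "0 < b + p - a" "b + p - a < 2 * p"
          obtain k where k: "b + p - a = p * k" using dv by blast
          have "k \<noteq> 0" using k q by auto
          moreover have "k < 2" using k q(2) p0 by (metis mult_less_cancel1 mult.commute)
          ultimately have "k = 1" by linarith
          then show ?thesis using k by simp
        qed
        then show False using ab S(4) by auto
      qed
    qed
    have cl: "(x + d) mod p \<in> A" if x: "x \<in> A" for x
    proof -
      have "(x + b) mod p \<in> B" using eqb x by blast
      then obtain y where y: "y \<in> A" "(y + a) mod p = (x + b) mod p"
        using eqa by (metis (no_types, lifting) imageE)
      have "y = (x + d) mod p" unfolding d_def
        using t2[of y p a b x] y A ab by auto
      then show ?thesis using y by simp
    qed
    obtain x0 where "x0 \<in> A" using A by auto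
    then have "A = {..<p}" using orbit_all[OF p d _ cl A(1)] by blast
    then have "card A = p" by simp
    then have "p \<le> card B" using cardim[OF S(2)] card_mono[OF finB imA[OF S(2)]] by simp
    then show ?thesis by (simp add: B_def)
  qed
qed

definition reach :: "(nat \<Rightarrow> nat set) \<Rightarrow> nat \<Rightarrow> nat \<Rightarrow> nat set" where
  "reach S p j = {(\<Sum>i<j. d i) mod p | d. \<forall>i<j. d i \<in> S i}"

lemma reach_iff: "x \<in> reach S p j \<longleftrightarrow> (\<exists>d. x = (\<Sum>i<j. d i) mod p \<and> (\<forall>i<j. d i \<in> S i))"
  unfolding reach_def by blast

lemma reach_sub: "0 < p \<Longrightarrow> reach S p j \<subseteq> {..<p}"
  by (auto simp: reach_iff)

lemma reach_card:
  assumes p: "prime p" and S: "\<And>i. S i \<subseteq> {..<p}" "\<And>i. 2 \<le> card (S i)"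
  shows "min p (j + 1) \<le> card (reach S p j)"
proof (induction j)
  case 0
  have "reach S p 0 = {0}" by (auto simp: reach_iff)
  then show ?case by simp
next
  case (Suc j)
  have p0: "0 < p" using p prime_gt_0_nat by blast
  have fin: "finite (reach S p (Suc j))" using reach_sub[OF p0] finite_subset by blast
  have ne: "reach S p j \<noteq> {}" using Suc p0 by (cases "reach S p j = {}") auto
  obtain a b where ab: "a \<in> S j" "b \<in> S j" "a \<noteq> b"
  proof -
    have "1 < card (S j)" using S(2)[of j] by simp
    moreover have "finite (S j)" using S(1)[of j] finite_subset by blast
    ultimately have "\<not> (\<forall>a\<in>S j. \<forall>b\<in>S j. a = b)" using card_le_Suc0_iff_eq[of "S j"] by simp
    then show ?thesis using that by blast
  qed
  have sub: "{(x + s) mod p | x s. x \<in> reach S p j \<and> s \<in> S j} \<subseteq> reach S p (Suc j)"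
  proof
    fix y assume "y \<in> {(x + s) mod p | x s. x \<in> reach S p j \<and> s \<in> S j}"
    then obtain x s where xs: "y = (x + s) mod p" "x \<in> reach S p j" "s \<in> S j" by blast
    then obtain d where d: "x = (\<Sum>i<j. d i) mod p" "\<forall>i<j. d i \<in> S i"
      unfolding reach_iff by blast
    define d' where "d' = d(j := s)"
    have "(\<Sum>i<Suc j. d' i) = (\<Sum>i<j. d i) + s"
      by (simp add: d'_def)
    then have "y = (\<Sum>i<Suc j. d' i) mod p" using xs d by (simp add: mod_add_left_eq)
    moreover have "\<forall>i<Suc j. d' i \<in> S i" using d xs by (auto simp: d'_def less_Suc_eq)
    ultimately show "y \<in> reach S p (Suc j)" unfolding reach_iff by blast
  qed
  have "min p (card (reach S p j) + 1) \<le> card {(x + s) mod p | x s. x \<in> reach S p j \<and> s \<in> S j}"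
    by (rule sumset_step[OF p reach_sub[OF p0] ne S(1) ab])
  also have "\<dots> \<le> card (reach S p (Suc j))" by (rule card_mono[OF fin sub])
  finally show ?case using Suc by simp
qed

lemma zero_sum_choice:
  assumes p: "prime (p::nat)" and S: "\<And>i. S i \<subseteq> {..<p}" "\<And>i. 2 \<le> card (S i)"
  shows "\<exists>d. (\<forall>i<p. d i \<in> S i) \<and> (\<Sum>i<p. d i) mod p = 0"
proof -
  have p0: "0 < p" using p prime_gt_0_nat by blast
  have "min p (p + 1) \<le> card (reach S p p)" by (rule reach_card[OF p S])
  then have c: "card {..<p} \<le> card (reach S p p)" by simp
  have "reach S p p = {..<p}"
    by (rule card_seteq[OF finite_lessThan reach_sub[OF p0] c])
  then have "0 \<in> reach S p p" using p0 by simp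
  then obtain d where "0 = (\<Sum>i<p. d i) mod p" "\<forall>i<p. d i \<in> S i" unfolding reach_iff by blast
  then show ?thesis by auto
qed

definition cyc_ends :: "nat \<Rightarrow> nat \<Rightarrow> nat \<Rightarrow> nat \<times> nat" where
  "cyc_ends M p e = (e div M, Suc (e div M) mod p)"

lemma cyc_oriented: assumes "2 \<le> p" "0 < M"
  shows "is_oriented_graph {..<p} {..<p*M} (cyc_ends M p)"
  unfolding is_oriented_graph_def cyc_ends_def
proof (intro conjI ballI)
  fix e assume e: "e \<in> {..<p*M}"
  then have i: "e div M < p" using assms by (simp add: div_less_iff_less_mult mult.commute)
  show "fst (e div M, Suc (e div M) mod p) \<in> {..<p}" using i by simp
  show "snd (e div M, Suc (e div M) mod p) \<in> {..<p}" using assms by simp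
  show "fst (e div M, Suc (e div M) mod p) \<noteq> snd (e div M, Suc (e div M) mod p)"
  proof (cases "Suc (e div M) < p")
    case True then show ?thesis by simp
  next
    case False
    then have "Suc (e div M) = p" using i by simp
    then show ?thesis using assms by simp
  qed
qed simp_all

lemma bundle_mem: assumes "0 < (M::nat)" shows "e \<in> {e div M * M..<e div M * M + M}"
proof -
  have "e div M * M + e mod M = e" by (rule div_mult_mod_eq)
  moreover have "e mod M < M" using assms by simp
  ultimately show ?thesis unfolding atLeastLessThan_iff by linarith
qed

lemma cyc_colorable:
  assumes p: "prime p" "3 \<le> p"
  shows "group_colorable {..<p} {..<p*(p-2)} (cyc_ends (p-2) p) (zmodg p)"
  unfolding group_colorable_def
proof
  define M where "M = p - 2"
  have M0: "0 < M" using p by (simp add: M_def)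
  have p0: "0 < p" using p by simp
  fix \<phi> assume \<phi>: "\<phi> \<in> {..<p*(p-2)} \<rightarrow> carrier (zmodg p)"
  define S where "S i = (if i < p then {..<p} - \<phi> ` {i*M..<i*M+M} else {0,1})" for i
  have Ssub: "S i \<subseteq> {..<p}" for i using p by (auto simp: S_def)
  have Scard: "2 \<le> card (S i)" for i
  proof (cases "i < p")
    case True
    have "card (\<phi> ` {i*M..<i*M+M}) \<le> M"
      using card_image_le[of "{i*M..<i*M+M}" \<phi>] by simp
    then have "p - M \<le> card ({..<p} - \<phi> ` {i*M..<i*M+M})"
      using diff_card_le_card_Diff[of "\<phi> ` {i*M..<i*M+M}" "{..<p}"] by simp
    then show ?thesis using True p by (simp add: S_def M_def)
  next
    case False then show ?thesis by (simp add: S_def)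
  qed
  have ex: "\<exists>d. (\<forall>i<p. d i \<in> S i) \<and> (\<Sum>i<p. d i) mod p = 0"
    by (rule zero_sum_choice[OF p(1) Ssub Scard])
  then obtain d where d0: "(\<forall>i<p. d i \<in> S i) \<and> (\<Sum>i<p. d i) mod p = 0" ..
  then have d: "\<forall>i<p. d i \<in> S i" "(\<Sum>i<p. d i) mod p = 0" by simp_all
  define c where "c j = (\<Sum>i<j. d i) mod p" for j
  have cV: "c \<in> {..<p} \<rightarrow> carrier (zmodg p)" using p0 by (auto simp: c_def zmodg_simps)
  have key: "(d i + c i) mod p = c (Suc i mod p)" if i: "i < p" for i
  proof -
    have "(d i + c i) mod p = (\<Sum>i<Suc i. d i) mod p"
      by (simp add: c_def mod_add_right_eq add.commute)
    then show ?thesis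
    proof (cases "Suc i < p")
      case True then show ?thesis using \<open>(d i + c i) mod p = _\<close> by (simp add: c_def)
    next
      case False
      then have "Suc i = p" using i by simp
      then show ?thesis using \<open>(d i + c i) mod p = _\<close> d(2) by (simp add: c_def)
    qed
  qed
  have "\<forall>e\<in>{..<p*(p-2)}. c (snd (cyc_ends (p-2) p e)) \<otimes>\<^bsub>zmodg p\<^esub> inv\<^bsub>zmodg p\<^esub> (c (fst (cyc_ends (p-2) p e))) \<noteq> \<phi> e"
  proof
    fix e assume e: "e \<in> {..<p*(p-2)}"
    define i where "i = e div M"
    have i: "i < p" using e M0 by (simp add: i_def M_def div_less_iff_less_mult mult.commute)
    have ends: "cyc_ends (p-2) p e = (i, Suc i mod p)" by (simp add: cyc_ends_def i_def M_def)
    define r where "r = c (Suc i mod p) \<otimes>\<^bsub>zmodg p\<^esub> inv\<^bsub>zmodg p\<^esub> (c i)"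
    have ci: "c i < p" "c (Suc i mod p) < p" using p0 by (auto simp: c_def)
    have r: "r < p" "(r + c i) mod p = c (Suc i mod p)"
      using zmodg_diff[OF p0 ci(2) ci(1)] by (auto simp: r_def)
    have dip: "d i < p" using d(1) i Ssub by blast
    have "r = d i" using t1[OF r(1) dip, of "c i"] r(2) key[OF i] by simp
    moreover have "\<phi> e \<in> \<phi> ` {i*M..<i*M+M}"
      unfolding i_def by (rule imageI[OF bundle_mem[OF M0]])
    moreover have "d i \<in> S i" using d(1) i by blast
    then have "d i \<notin> \<phi> ` {i*M..<i*M+M}" using i unfolding S_def by simp
    ultimately have "r \<noteq> \<phi> e" by metis
    then show "c (snd (cyc_ends (p-2) p e)) \<otimes>\<^bsub>zmodg p\<^esub> inv\<^bsub>zmodg p\<^esub> (c (fst (cyc_ends (p-2) p e))) \<noteq> \<phi> e"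
      by (simp add: ends r_def)
  qed
  then show "\<exists>c\<in>{..<p} \<rightarrow> carrier (zmodg p). \<forall>e\<in>{..<p*(p-2)}. c (snd (cyc_ends (p-2) p e)) \<otimes>\<^bsub>zmodg p\<^esub> inv\<^bsub>zmodg p\<^esub> (c (fst (cyc_ends (p-2) p e))) \<noteq> \<phi> e"
    using cV by blast
qed

lemma cyc_noncolorable:
  assumes p: "odd p" "3 \<le> p" and M0: "0 < (M::nat)"
  shows "\<not> group_colorable {..<p} {..<p*M} (cyc_ends M p) (zmodg (2*M))"
proof
  assume col: "group_colorable {..<p} {..<p*M} (cyc_ends M p) (zmodg (2*M))"
  define \<phi> where "\<phi> e = 2 * (e mod M)" for e
  have n0: "0 < 2 * M" using M0 by simp
  have \<phi>: "\<phi> \<in> {..<p*M} \<rightarrow> carrier (zmodg (2*M))" using M0 by (auto simp: \<phi>_def zmodg_simps)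
  obtain c where c: "c \<in> {..<p} \<rightarrow> carrier (zmodg (2*M))"
    and ok: "\<forall>e\<in>{..<p*M}. c (snd (cyc_ends M p e)) \<otimes>\<^bsub>zmodg (2*M)\<^esub> inv\<^bsub>zmodg (2*M)\<^esub> (c (fst (cyc_ends M p e))) \<noteq> \<phi> e"
    using col \<phi> unfolding group_colorable_def by blast
  have cl: "c i < 2 * M" if "i < p" for i using c that by (auto simp: zmodg_simps)
  have alt: "even (c (Suc i mod p)) \<longleftrightarrow> \<not> even (c i)" if i: "i < p" for i
  proof -
    define r where "r = c (Suc i mod p) \<otimes>\<^bsub>zmodg (2*M)\<^esub> inv\<^bsub>zmodg (2*M)\<^esub> (c i)"
    have nx: "Suc i mod p < p" using p by simp
    have r: "r < 2 * M" "(r + c i) mod (2*M) = c (Suc i mod p)"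
      using zmodg_diff[OF n0 cl[OF nx] cl[OF i]] by (auto simp: r_def)
    have "odd r"
    proof
      assume "even r"
      then obtain j where j: "r = 2 * j" by blast
      have jM: "j < M" using j r(1) by simp
      define e where "e = i * M + j"
      have ediv: "e div M = i" "e mod M = j" using jM by (simp_all add: e_def)
      have "e < p * M"
      proof -
        have "e < i * M + M" using jM by (simp add: e_def)
        also have "i * M + M = Suc i * M" by simp
        also have "\<dots> \<le> p * M" using i by (intro mult_right_mono) auto
        finally show ?thesis .
      qed
      then have "c (snd (cyc_ends M p e)) \<otimes>\<^bsub>zmodg (2*M)\<^esub> inv\<^bsub>zmodg (2*M)\<^esub> (c (fst (cyc_ends M p e))) \<noteq> \<phi> e"
        using ok by blast
      then show False using ediv j by (simp add: cyc_ends_def r_def \<phi>_def)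
    qed
    have "even (c (Suc i mod p)) \<longleftrightarrow> even (r + c i)"
      using r(2) by (metis dvd_mod_iff dvd_triv_left even_numeral dvd_mult_left)
    then show ?thesis using \<open>odd r\<close> by simp
  qed
  have par: "even (c i) \<longleftrightarrow> (even (c 0) \<longleftrightarrow> even i)" if "i < p" for i
    using that
  proof (induction i)
    case 0 then show ?case by simp
  next
    case (Suc i)
    then have "Suc i mod p = Suc i" by simp
    then show ?case using alt[of i] Suc by simp
  qed
  have pm: "p - 1 < p" "Suc (p - 1) mod p = 0" using p by simp_all
  have "even (c 0) \<longleftrightarrow> \<not> even (c (p - 1))" using alt[OF pm(1)] pm(2) by simp
  moreover have "even (p - 1)" using p by simp
  ultimately show False using par[OF pm(1)] by simp
qed

definition Ew :: "'e set \<Rightarrow> ('e \<Rightarrow> 'v \<times> 'v) \<Rightarrow> 'v set \<Rightarrow> 'e set" where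
  "Ew E ends W = {e\<in>E. fst (ends e) \<in> W \<and> snd (ends e) \<in> W}"

definition vdeg :: "'e set \<Rightarrow> ('e \<Rightarrow> 'v \<times> 'v) \<Rightarrow> 'v set \<Rightarrow> 'v \<Rightarrow> nat" where
  "vdeg E ends W v = card {e\<in>Ew E ends W. fst (ends e) = v \<or> snd (ends e) = v}"

lemma greedy:
  fixes G' :: "('g, 'm) monoid_scheme" (structure)
  assumes og: "is_oriented_graph V E ends" and grp: "comm_group G'"
    and fin: "finite (carrier G')" and D: "D < card (carrier G')"
    and low: "\<And>W. W \<subseteq> V \<Longrightarrow> W \<noteq> {} \<Longrightarrow> \<exists>v\<in>W. vdeg E ends W v \<le> D"
  shows "group_colorable V E ends G'"
  unfolding group_colorable_def
proof
  interpret comm_group G' by (rule grp)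
  fix \<phi> assume \<phi>: "\<phi> \<in> E \<rightarrow> carrier G'"
  have finV: "finite V" and finE: "finite E" and loops: "\<And>e. e \<in> E \<Longrightarrow> fst (ends e) \<noteq> snd (ends e)"
    and inV: "\<And>e. e \<in> E \<Longrightarrow> fst (ends e) \<in> V \<and> snd (ends e) \<in> V"
    using og by (auto simp: is_oriented_graph_def)
  define P where "P A \<longleftrightarrow> (\<exists>c. (\<forall>x. c x \<in> carrier G') \<and>
      (\<forall>e\<in>Ew E ends A. c (snd (ends e)) \<otimes> inv (c (fst (ends e))) \<noteq> \<phi> e))" for A
  have "P V"
  using finV proof (induction rule: finite_remove_induct)
    case empty
    show ?case unfolding P_def by (intro exI[of _ "\<lambda>_. \<one>"]) (auto simp: Ew_def)
  next
    case (remove A)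
    obtain v where v: "v \<in> A" "vdeg E ends A v \<le> D" using low remove.hyps by blast
    obtain c where c: "\<forall>x. c x \<in> carrier G'"
      "\<forall>e\<in>Ew E ends (A - {v}). c (snd (ends e)) \<otimes> inv (c (fst (ends e))) \<noteq> \<phi> e"
      using remove.IH[OF v(1)] unfolding P_def by blast
    define N where "N = {e\<in>Ew E ends A. fst (ends e) = v \<or> snd (ends e) = v}"
    define forb where "forb e = (if snd (ends e) = v then \<phi> e \<otimes> c (fst (ends e))
        else inv (\<phi> e) \<otimes> c (snd (ends e)))" for e
    have finN: "finite N" using finE by (auto simp: N_def Ew_def)
    have "card (forb ` N) \<le> card N" using card_image_le[OF finN] .
    also have "card N \<le> D" using v(2) by (simp add: vdeg_def N_def)
    finally have "card (forb ` N) < card (carrier G')" using D by linarith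
    then obtain x where x: "x \<in> carrier G'" "x \<notin> forb ` N"
      by (metis card_mono finite_imageI finN not_le subsetI)
    define c' where "c' = c(v := x)"
    have c'c: "\<forall>y. c' y \<in> carrier G'" using c(1) x(1) by (simp add: c'_def)
    have "\<forall>e\<in>Ew E ends A. c' (snd (ends e)) \<otimes> inv (c' (fst (ends e))) \<noteq> \<phi> e"
    proof
      fix e assume e: "e \<in> Ew E ends A"
      have eE: "e \<in> E" using e by (simp add: Ew_def)
      have ph: "\<phi> e \<in> carrier G'" using \<phi> eE by blast
      show "c' (snd (ends e)) \<otimes> inv (c' (fst (ends e))) \<noteq> \<phi> e"
      proof (cases "e \<in> N")
        case False
        then have "e \<in> Ew E ends (A - {v})" using e by (auto simp: N_def Ew_def)
        moreover have "c' (snd (ends e)) = c (snd (ends e))" "c' (fst (ends e)) = c (fst (ends e))"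
          using False e by (auto simp: N_def c'_def)
        ultimately show ?thesis using c(2) by simp
      next
        case True
        have fx: "forb e \<noteq> x" using x(2) True by blast
        show ?thesis
        proof (cases "snd (ends e) = v")
          case sv: True
          then have fv: "fst (ends e) \<noteq> v" using loops[OF eE] by auto
          have "x \<otimes> inv (c (fst (ends e))) \<noteq> \<phi> e"
          proof
            assume "x \<otimes> inv (c (fst (ends e))) = \<phi> e"
            then have "x = \<phi> e \<otimes> c (fst (ends e))"
              using inv_solve_right'[OF ph x(1) c(1)[rule_format]] by simp
            then show False using fx sv by (simp add: forb_def)
          qed
          then show ?thesis using sv fv by (simp add: c'_def)
        next
          case sv: False
          then have fv: "fst (ends e) = v" using True by (simp add: N_def)
          have "c (snd (ends e)) \<otimes> inv x \<noteq> \<phi> e"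
          proof
            assume "c (snd (ends e)) \<otimes> inv x = \<phi> e"
            then have "c (snd (ends e)) = \<phi> e \<otimes> x"
              using inv_solve_right'[OF ph c(1)[rule_format] x(1)] by simp
            then have "x = inv (\<phi> e) \<otimes> c (snd (ends e))"
              using inv_solve_left[OF x(1) ph c(1)[rule_format, of "snd (ends e)"]] by simp
            then show False using fx sv by (simp add: forb_def)
          qed
          then show ?thesis using sv fv by (simp add: c'_def)
        qed
      qed
    qed
    then show ?case unfolding P_def using c'c by blast
  qed
  then obtain c where c: "\<forall>x. c x \<in> carrier G'"
      "\<forall>e\<in>Ew E ends V. c (snd (ends e)) \<otimes> inv (c (fst (ends e))) \<noteq> \<phi> e"
    unfolding P_def by blast
  have "Ew E ends V = E" using inV by (auto simp: Ew_def)
  then show "\<exists>c\<in>V \<rightarrow> carrier G'. \<forall>e\<in>E. c (snd (ends e)) \<otimes> inv (c (fst (ends e))) \<noteq> \<phi> e"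
    using c by auto
qed

lemma count_ineq:
  fixes \<Gamma> :: "('g, 'm) monoid_scheme" (structure)
  assumes og: "is_oriented_graph V E ends" and ab: "abelian_of_order \<Gamma> k"
    and col: "group_colorable V E ends \<Gamma>" and W: "W \<subseteq> V"
  shows "k ^ card (Ew E ends W) \<le> k ^ card W * (k - 1) ^ card (Ew E ends W)"
proof -
  interpret comm_group \<Gamma> using ab by (simp add: abelian_of_order_def)
  have finV: "finite V" and finE: "finite E"
    using og by (auto simp: is_oriented_graph_def)
  define EW where "EW = Ew E ends W"
  define C where "C = carrier \<Gamma>"
  have kC: "card C = k" "finite C" using ab by (auto simp: abelian_of_order_def C_def)
  have finW: "finite W" using W finV finite_subset by blast
  have finEW: "finite EW" using finE by (auto simp: EW_def Ew_def)
  define good where "good c = PiE EW (\<lambda>e. C - {c (snd (ends e)) \<otimes> inv (c (fst (ends e)))})" for c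
  have cover: "PiE EW (\<lambda>_. C) \<subseteq> (\<Union>c\<in>PiE W (\<lambda>_. C). good c)"
  proof
    fix \<phi> assume \<phi>: "\<phi> \<in> PiE EW (\<lambda>_. C)"
    define \<phi>' where "\<phi>' e = (if e \<in> EW then \<phi> e else \<one>)" for e
    have "\<phi>' \<in> E \<rightarrow> carrier \<Gamma>" using \<phi> by (auto simp: \<phi>'_def C_def PiE_def Pi_def)
    then obtain c where c: "c \<in> V \<rightarrow> carrier \<Gamma>"
      "\<forall>e\<in>E. c (snd (ends e)) \<otimes> inv (c (fst (ends e))) \<noteq> \<phi>' e"
      using col unfolding group_colorable_def by blast
    define c0 where "c0 = restrict c W"
    have c0: "c0 \<in> PiE W (\<lambda>_. C)" using c(1) W by (auto simp: c0_def C_def)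
    have "\<phi> \<in> good c0"
      unfolding good_def
    proof (rule PiE_I)
      fix e assume e: "e \<in> EW"
      then have eE: "e \<in> E" and ends: "fst (ends e) \<in> W" "snd (ends e) \<in> W"
        by (auto simp: EW_def Ew_def)
      have "c (snd (ends e)) \<otimes> inv (c (fst (ends e))) \<noteq> \<phi> e"
        using c(2) eE e by (auto simp: \<phi>'_def)
      then show "\<phi> e \<in> C - {c0 (snd (ends e)) \<otimes> inv (c0 (fst (ends e)))}"
        using \<phi> e ends by (auto simp: c0_def)
    next
      fix e assume "e \<notin> EW" then show "\<phi> e = undefined" using \<phi> by auto
    qed
    then show "\<phi> \<in> (\<Union>c\<in>PiE W (\<lambda>_. C). good c)" using c0 by blast
  qed
  have cgood: "card (good c) = (k - 1) ^ card EW" if c: "c \<in> PiE W (\<lambda>_. C)" for c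
  proof -
    have "card (good c) = (\<Prod>e\<in>EW. card (C - {c (snd (ends e)) \<otimes> inv (c (fst (ends e)))}))"
      unfolding good_def by (rule card_PiE[OF finEW])
    also have "\<dots> = (\<Prod>e\<in>EW. k - 1)"
    proof (rule prod.cong[OF refl])
      fix e assume e: "e \<in> EW"
      then have "fst (ends e) \<in> W" "snd (ends e) \<in> W" by (auto simp: EW_def Ew_def)
      then have "c (snd (ends e)) \<otimes> inv (c (fst (ends e))) \<in> C"
        using c by (auto simp: C_def)
      then show "card (C - {c (snd (ends e)) \<otimes> inv (c (fst (ends e)))}) = k - 1"
        using kC by simp
    qed
    finally show ?thesis by simp
  qed
  have "k ^ card EW = card (PiE EW (\<lambda>_. C))"
    using card_PiE[OF finEW, of "\<lambda>_. C"] kC by simp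
  also have "\<dots> \<le> card (\<Union>c\<in>PiE W (\<lambda>_. C). good c)"
  proof (rule card_mono[OF _ cover])
    show "finite (\<Union>c\<in>PiE W (\<lambda>_. C). good c)"
      using finite_PiE[OF finW, of "\<lambda>_. C"] kC(2) finEW
      by (auto simp: good_def intro!: finite_PiE)
  qed
  also have "\<dots> \<le> (\<Sum>c\<in>PiE W (\<lambda>_. C). card (good c))" by (rule card_UN_le[OF finite_PiE[OF finW]]) (use kC in auto)
  also have "\<dots> = (\<Sum>c\<in>PiE W (\<lambda>_. C). (k - 1) ^ card EW)" by (rule sum.cong[OF refl]) (rule cgood)
  also have "\<dots> = k ^ card W * (k - 1) ^ card EW"
    using card_PiE[OF finW, of "\<lambda>_. C"] kC by simp
  finally show ?thesis by (simp add: EW_def)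
qed

lemma edges_bound:
  assumes k: "2 \<le> (k::nat)" and ineq: "k ^ m \<le> k ^ n * (k - 1) ^ m"
  shows "real m \<le> real n * real k * ln (real k)"
proof -
  have k0: "0 < real k" "0 < real k - 1" using k by auto
  have "real k ^ m \<le> real k ^ n * (real k - 1) ^ m"
  proof -
    have "real (k ^ m) \<le> real (k ^ n * (k - 1) ^ m)" using ineq by linarith
    then show ?thesis using k by (simp add: of_nat_diff)
  qed
  then have "ln (real k ^ m) \<le> ln (real k ^ n * (real k - 1) ^ m)"
    using k0 by simp
  then have A: "m * ln (real k) \<le> n * ln (real k) + m * ln (real k - 1)"
    using k0 by (simp add: ln_mult ln_realpow)
  have "ln ((real k - 1) / real k) \<le> (real k - 1) / real k - 1"
    by (rule ln_le_minus_one) (use k0 in simp)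
  then have "ln (real k - 1) - ln (real k) \<le> - 1 / real k"
  proof -
    have "ln ((real k - 1) / real k) = ln (real k - 1) - ln (real k)" using k0 by (simp add: ln_div)
    moreover have "(real k - 1) / real k - 1 = - 1 / real k" using k0 by (simp add: field_simps)
    ultimately show ?thesis using \<open>ln ((real k - 1) / real k) \<le> _\<close> by linarith
  qed
  then have B: "m * (1 / real k) \<le> m * (ln (real k) - ln (real k - 1))"
    by (intro mult_left_mono) auto
  have "m * (1 / real k) \<le> n * ln (real k)" using A B by (simp add: algebra_simps)
  then have "m \<le> n * ln (real k) * real k" using k0 by (simp add: field_simps)
  then show ?thesis by (simp add: algebra_simps)
qed

lemma deg_sum:
  assumes og: "is_oriented_graph V E ends" and W: "W \<subseteq> V"
  shows "(\<Sum>v\<in>W. vdeg E ends W v) = 2 * card (Ew E ends W)"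
proof -
  have finV: "finite V" and finE: "finite E" and loops: "\<And>e. e \<in> E \<Longrightarrow> fst (ends e) \<noteq> snd (ends e)"
    using og by (auto simp: is_oriented_graph_def)
  have finW: "finite W" using W finV finite_subset by blast
  have finEW: "finite (Ew E ends W)" using finE by (auto simp: Ew_def)
  have "(\<Sum>v\<in>W. vdeg E ends W v) = (\<Sum>v\<in>W. \<Sum>e\<in>Ew E ends W. if fst (ends e) = v \<or> snd (ends e) = v then 1 else 0)"
    unfolding vdeg_def by (rule sum.cong[OF refl]) (simp add: sum.If_cases finEW Int_def)
  also have "\<dots> = (\<Sum>e\<in>Ew E ends W. \<Sum>v\<in>W. if fst (ends e) = v \<or> snd (ends e) = v then 1 else 0)"
    by (rule sum.swap)
  also have "\<dots> = (\<Sum>e\<in>Ew E ends W. 2)"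
  proof (rule sum.cong[OF refl])
    fix e assume e: "e \<in> Ew E ends W"
    then have "{v\<in>W. fst (ends e) = v \<or> snd (ends e) = v} = {fst (ends e), snd (ends e)}"
      by (auto simp: Ew_def)
    moreover have "fst (ends e) \<noteq> snd (ends e)" using e loops by (auto simp: Ew_def)
    ultimately show "(\<Sum>v\<in>W. if fst (ends e) = v \<or> snd (ends e) = v then 1 else 0) = (2::nat)"
      by (simp add: sum.If_cases finW Int_def)
  qed
  finally show ?thesis by simp
qed

lemma low_deg:
  fixes \<Gamma> :: "('g, 'm) monoid_scheme"
  assumes og: "is_oriented_graph V E ends" and ab: "abelian_of_order \<Gamma> k" and k: "2 \<le> k"
    and col: "group_colorable V E ends \<Gamma>" and W: "W \<subseteq> V" "W \<noteq> {}"
  shows "\<exists>v\<in>W. vdeg E ends W v \<le> nat \<lfloor>2 * real k * ln (real k)\<rfloor>"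
proof (rule ccontr)
  define D where "D = nat \<lfloor>2 * real k * ln (real k)\<rfloor>"
  assume "\<not> ?thesis"
  then have big: "\<forall>v\<in>W. D + 1 \<le> vdeg E ends W v" by (auto simp: D_def)
  have finW: "finite W" using W og finite_subset by (auto simp: is_oriented_graph_def)
  have n0: "0 < card W" using W finW by (simp add: card_gt_0_iff)
  have "card W * (D + 1) \<le> (\<Sum>v\<in>W. vdeg E ends W v)"
    using sum_bounded_below[of W "D + 1" "vdeg E ends W"] big by simp
  also have "\<dots> = 2 * card (Ew E ends W)" by (rule deg_sum[OF og W(1)])
  finally have A0: "card W * (D + 1) \<le> 2 * card (Ew E ends W)" .
  have A: "real (card W) * (real D + 1) \<le> 2 * real (card (Ew E ends W))"
  proof -
    have "real (card W * (D + 1)) \<le> real (2 * card (Ew E ends W))"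
      using A0 by (simp only: of_nat_le_iff)
    then show ?thesis by (simp add: algebra_simps)
  qed
  have B: "real (card (Ew E ends W)) \<le> real (card W) * real k * ln (real k)"
    by (rule edges_bound[OF k count_ineq[OF og ab col W(1)]])
  have lnk: "0 \<le> ln (real k)" using k by simp
  have C: "2 * real k * ln (real k) < real D + 1"
  proof -
    have "0 \<le> 2 * real k * ln (real k)" using lnk by simp
    then have "real D = of_int \<lfloor>2 * real k * ln (real k)\<rfloor>" by (simp add: D_def)
    then show ?thesis by linarith
  qed
  have "real (card W) * (2 * real k * ln (real k)) < real (card W) * (real D + 1)"
    using C n0 by simp
  then show False using A B by (simp add: algebra_simps)
qed

lemma hb: assumes k: "2 \<le> k" shows "h_bound k (nat \<lfloor>2 * real k * ln (real k)\<rfloor> + 1)"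
  unfolding h_bound_def
proof (intro allI impI)
  fix V E :: "nat set" and ends and \<Gamma> :: "nat monoid" and \<Gamma>' :: "nat monoid" and m
  assume A: "is_oriented_graph V E ends \<and> abelian_of_order \<Gamma> k \<and> group_colorable V E ends \<Gamma>"
  assume B: "abelian_of_order \<Gamma>' m \<and> nat \<lfloor>2 * real k * ln (real k)\<rfloor> + 1 \<le> m"
  show "group_colorable V E ends \<Gamma>'"
  proof (rule greedy)
    show "is_oriented_graph V E ends" using A by simp
    show "comm_group \<Gamma>'" "finite (carrier \<Gamma>')" using B by (auto simp: abelian_of_order_def)
    show "nat \<lfloor>2 * real k * ln (real k)\<rfloor> < card (carrier \<Gamma>')" using B by (auto simp: abelian_of_order_def)
    show "\<exists>v\<in>W. vdeg E ends W v \<le> nat \<lfloor>2 * real k * ln (real k)\<rfloor>" if "W \<subseteq> V" "W \<noteq> {}" for W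
    proof (rule low_deg[of V E ends \<Gamma> k W])
      show "is_oriented_graph V E ends" "abelian_of_order \<Gamma> k" "group_colorable V E ends \<Gamma>"
        using A by simp_all
    qed (use k that in auto)
  qed
qed

lemma not_hb: assumes p: "prime p" "3 \<le> p" and n: "n \<le> 2 * (p - 2)"
  shows "\<not> h_bound p n"
proof
  assume hbd: "h_bound p n"
  have og: "is_oriented_graph {..<p} {..<p*(p-2)} (cyc_ends (p-2) p)"
    using cyc_oriented[of p "p-2"] p by simp
  have ab: "abelian_of_order (zmodg p) p" using zmodg_order p by simp
  have col: "group_colorable {..<p} {..<p*(p-2)} (cyc_ends (p-2) p) (zmodg p)"
    using cyc_colorable p by blast
  have ab': "abelian_of_order (zmodg (2*(p-2))) (2*(p-2))" using zmodg_order p by simp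
  have "group_colorable {..<p} {..<p*(p-2)} (cyc_ends (p-2) p) (zmodg (2*(p-2)))"
    using hbd og ab col ab' n unfolding h_bound_def by blast
  moreover have "odd p" using p prime_odd_nat[of p] by simp
  ultimately show False using cyc_noncolorable[of p "p-2"] p by simp
qed

lemma h_le: assumes "2 \<le> k" shows "h k \<le> nat \<lfloor>2 * real k * ln (real k)\<rfloor> + 1"
  unfolding h_def by (rule Least_le) (rule hb[OF assms])

lemma h_prime: assumes p: "prime p" "3 \<le> p" shows "2 * p - 3 \<le> h p"
proof -
  have ex: "\<exists>n. h_bound p n" using hb[of p] p by auto
  have "h_bound p (h p)" unfolding h_def by (rule LeastI_ex[OF ex])
  then have "\<not> h p \<le> 2 * (p - 2)" using not_hb[OF p] by blast
  then show ?thesis by simp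
qed

theorem mainTheorem10:
  shows "(\<forall>\<epsilon>::real. \<epsilon> > 0 \<longrightarrow>
            infinite {k::nat. (\<exists>n. h_bound k n) \<and> real (h k) > (2 - \<epsilon>) * real k})
       \<and> (\<forall>\<epsilon>::real. \<epsilon> > 0 \<longrightarrow> (\<exists>K::nat. \<forall>k\<ge>K.
            (\<exists>n. h_bound k n) \<and> real (h k) < (2 + \<epsilon>) * real k * ln (real k)))"
proof (intro conjI allI impI)
  fix \<epsilon> :: real assume e: "\<epsilon> > 0"
  define N where "N = nat \<lceil>3 / \<epsilon>\<rceil> + 3"
  have sub: "{p. prime p \<and> N < p} \<subseteq> {k::nat. (\<exists>n. h_bound k n) \<and> real (h k) > (2 - \<epsilon>) * real k}"
  proof
    fix p assume "p \<in> {p. prime p \<and> N < p}"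
    then have p: "prime p" "N < p" by auto
    have p3: "3 \<le> p" using p(2) by (simp add: N_def)
    have ex: "\<exists>n. h_bound p n" using hb[of p] p3 by auto
    have "3 / \<epsilon> < real p"
    proof -
      have "3 / \<epsilon> \<le> real (nat \<lceil>3 / \<epsilon>\<rceil>)" by linarith
      also have "\<dots> < real p" using p(2) by (simp add: N_def)
      finally show ?thesis .
    qed
    then have "3 < \<epsilon> * real p" using e by (simp add: field_simps)
    moreover have "real (2 * p - 3) \<le> real (h p)" using h_prime[OF p(1) p3] by linarith
    moreover have "real (2 * p - 3) = 2 * real p - 3" using p3 by simp
    ultimately have "real (h p) > (2 - \<epsilon>) * real p" by (simp add: algebra_simps)
    then show "p \<in> {k::nat. (\<exists>n. h_bound k n) \<and> real (h k) > (2 - \<epsilon>) * real k}" using ex by simp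
  qed
  have "infinite {p::nat. prime p \<and> N < p}"
  proof
    assume fin: "finite {p::nat. prime p \<and> N < p}"
    have "{p::nat. prime p} \<subseteq> {p. prime p \<and> N < p} \<union> {..N}" by auto
    then have "finite {p::nat. prime p}" using fin finite_subset by blast
    then show False using primes_infinite by blast
  qed
  then show "infinite {k::nat. (\<exists>n. h_bound k n) \<and> real (h k) > (2 - \<epsilon>) * real k}"
    using sub infinite_super by blast
next
  fix \<epsilon> :: real assume e: "\<epsilon> > 0"
  define K where "K = nat \<lceil>2 / \<epsilon>\<rceil> + 3"
  show "\<exists>K::nat. \<forall>k\<ge>K. (\<exists>n. h_bound k n) \<and> real (h k) < (2 + \<epsilon>) * real k * ln (real k)"
  proof (rule exI[of _ K], intro allI impI conjI)
    fix k assume k: "K \<le> k"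
    have k2: "2 \<le> k" using k by (simp add: K_def)
    show "\<exists>n. h_bound k n" using hb[OF k2] by blast
    have k0: "0 < real k" using k2 by simp
    have lnk: "1 / 2 \<le> ln (real k)"
    proof -
      have "ln (1 / real k) \<le> 1 / real k - 1" by (rule ln_le_minus_one) (use k0 in simp)
      then have "1 - 1 / real k \<le> ln (real k)" using k0 by (simp add: ln_div)
      moreover have "1 / real k \<le> 1 / 2" using k2 by (simp add: field_simps)
      ultimately show ?thesis by linarith
    qed
    have "2 / \<epsilon> < real k"
    proof -
      have "2 / \<epsilon> \<le> real (nat \<lceil>2 / \<epsilon>\<rceil>)" by linarith
      also have "\<dots> < real k" using k by (simp add: K_def)
      finally show ?thesis .
    qed
    then have "2 < \<epsilon> * real k" using e by (simp add: field_simps)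
    then have ekl: "1 < \<epsilon> * real k * ln (real k)"
    proof -
      have "\<epsilon> * real k * (1 / 2) \<le> \<epsilon> * real k * ln (real k)"
        using lnk e k0 by (intro mult_left_mono) auto
      then show ?thesis using \<open>2 < \<epsilon> * real k\<close> by linarith
    qed
    have nn: "0 \<le> 2 * real k * ln (real k)" using lnk k0 by simp
    have "real (h k) \<le> real (nat \<lfloor>2 * real k * ln (real k)\<rfloor>) + 1"
      using h_le[OF k2] by linarith
    also have "\<dots> \<le> 2 * real k * ln (real k) + 1" using nn by linarith
    also have "\<dots> < (2 + \<epsilon>) * real k * ln (real k)" using ekl by (simp add: algebra_simps)
    finally show "real (h k) < (2 + \<epsilon>) * real k * ln (real k)" .
  qed
qed


end
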